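(* Let $j_1,j_2\in\tfrac12\mathbb{N}^+$ and write $R^{(j_1,j_2)}(t)$ as a $(2j_1+1)\times(2j_1+1)$ block matrix with blocks of size $(2j_2+1)\times(2j_2+1)$. Then for $1\le a,b\le 2j_1+1$ the $(a,b)$-block is an $(a-b)$-diagonal matrix if $|a-b|\le 2j_2$, and is zero if $|a-b|\ge 2j_2+1$. Here a square matrix is called $c$-diagonal if its $(i,k)$-entry is zero whenever $k-i\ne c$.
   Context: $\mathbb{F}$ is a field of characteristic zero in which every element has a square root; $q\in\mathbb{F}$ nonzero, not a root of unity, with fixed square root $q^{1/2}$ ($q^{k/2}:=(q^{1/2})^k$); other $(\cdot)^{1/2}$ are fixed square roots in $\mathbb{F}$. $[n]_q=\frac{q^n-q^{-n}}{q-q^{-1}}$, $c(t)=t-t^{-1}$, $\tfrac12\mathbb{N}^+=\{\tfrac12,1,\tfrac32,\dots\}$, $t$ an indeterminate, $\otimes$ Kronecker product. Leg notation: for factors $\mathbb{F}^{n_1}\otimes\mathbb{F}^{n_2}\otimes\mathbb{F}^{n_3}$, $X_{12}=X\otimes I_{n_3}$, $X_{23}=I_{n_1}\otimes X$, $X_{13}=P(X\otimes I_{n_2})P$ with $P$ the flip of factors 2,3; for non-square $Y$, $Y_{12}=Y\otimes I_{n_3}$, $Y_{23}=I_{n_1}\otimes Y$. For $j\in\tfrac12\mathbb{N}^+$: $\mathcal{E}^{(j+\frac12)}$ is $(4j+2)\times(2j+2)$ with only nonzero entries $\mathcal{E}_{(a,a)}=\big(\frac{[2j+2-a]_q}{[2j+1]_q}\big)^{1/2}$,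 $\mathcal{E}_{(a+2j+1,a+1)}=\big(\frac{[a]_q}{[2j+1]_q}\big)^{1/2}$ ($1\le a\le 2j+1$); $\mathcal{F}^{(j+\frac12)}$ is $(2j+2)\times(4j+2)$ with only nonzero entries $\mathcal{F}_{(a,a)}=\frac{([2j+2-a]_q[2j+1]_q)^{1/2}}{[2j+2-a]_q+[a-1]_q}$, $\mathcal{F}_{(a+1,a+2j+1)}=\frac{([a]_q[2j+1]_q)^{1/2}}{[2j+1-a]_q+[a]_q}$ ($1\le a\le 2j+1$). $R^{(\frac12,\frac12)}(t)$ is the $4\times4$ matrix with rows $(c(qt),0,0,0),(0,c(t),c(q),0),(0,c(q),c(t),0),(0,0,0,c(qt))$; recursively $R^{(\frac12,j+\frac12)}(t)=\mathcal{F}^{(j+\frac12)}_{23}R^{(\frac12,j)}_{13}(q^{-1/2}t)R^{(\frac12,\frac12)}_{12}(q^{j}t)\mathcal{E}^{(j+\frac12)}_{23}$ (factor sizes $2,2,2j+1$) and $R^{(j_1+\frac12,j_2)}(t)=\mathcal{F}^{(j_1+\frac12)}_{12}R^{(\frac12,j_2)}_{13}(q^{-j_1}t)R^{(j_1,j_2)}_{23}(q^{1/2}t)\mathcal{E}^{(j_1+\frac12)}_{12}$ (factor sizes $2,2j_1+1,2j_2+1$). *)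

theory Defs
  imports "Jordan_Normal_Form.Matrix"
begin

(* Kronecker product of matrices (index (i1,i2) |-> i1 * dim B + i2) *)
definition kron :: "'a::semiring_1 mat \<Rightarrow> 'a mat \<Rightarrow> 'a mat" where
  "kron A B = mat (dim_row A * dim_row B) (dim_col A * dim_col B)
     (\<lambda>(i,j). A $$ (i div dim_row B, j div dim_col B) * B $$ (i mod dim_row B, j mod dim_col B))"

(* flip of factors 2,3: permutation matrix mapping F^n1 (x) F^n2 (x) F^n3 to F^n1 (x) F^n3 (x) F^n2,
   e_a (x) e_b (x) e_c |-> e_a (x) e_c (x) e_b *)
definition flip23 :: "nat \<Rightarrow> nat \<Rightarrow> nat \<Rightarrow> 'a::semiring_1 mat" where
  "flip23 n1 n2 n3 = mat (n1*n2*n3) (n1*n2*n3)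
     (\<lambda>(r,s). if r = (s div (n2*n3)) * (n3*n2) + (s mod n3) * n2 + (s div n3) mod n2
              then 1 else 0)"

definition leg12 :: "'a::semiring_1 mat \<Rightarrow> nat \<Rightarrow> 'a mat" where
  "leg12 X n3 = kron X (1\<^sub>m n3)"
definition leg23 :: "nat \<Rightarrow> 'a::semiring_1 mat \<Rightarrow> 'a mat" where
  "leg23 n1 X = kron (1\<^sub>m n1) X"
definition leg13 :: "nat \<Rightarrow> nat \<Rightarrow> nat \<Rightarrow> 'a::semiring_1 mat \<Rightarrow> 'a mat" where
  "leg13 n1 n2 n3 X = flip23 n1 n3 n2 * kron X (1\<^sub>m n2) * flip23 n1 n2 n3"

definition qnum :: "'a::field \<Rightarrow> int \<Rightarrow> 'a" where
  "qnum q n = (q powi n - q powi (-n)) / (q - inverse q)"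

definition cfun :: "'a::field \<Rightarrow> 'a" where
  "cfun t = t - inverse t"

(* E^{(j+1/2)} with m = 2j; size (2m+2) x (m+2); 0-indexed version of the 1-indexed definition;
   sq is the fixed square-root function *)
definition Emat :: "('a::field \<Rightarrow> 'a) \<Rightarrow> 'a \<Rightarrow> nat \<Rightarrow> 'a mat" where
  "Emat sq q m = mat (2*m+2) (m+2) (\<lambda>(r,s).
     if r = s \<and> 1 \<le> r+1 \<and> r+1 \<le> m+1
       then sq (qnum q (int m + 2 - int (r+1)) / qnum q (int m + 1))
     else if m+1 \<le> r \<and> s = r - m \<and> 1 \<le> r - m \<and> r - m \<le> m+1
       then sq (qnum q (int (r - m)) / qnum q (int m + 1))
     else 0)"

(* F^{(j+1/2)} with m = 2j; size (m+2) x (2m+2) *)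
definition Fmat :: "('a::field \<Rightarrow> 'a) \<Rightarrow> 'a \<Rightarrow> nat \<Rightarrow> 'a mat" where
  "Fmat sq q m = mat (m+2) (2*m+2) (\<lambda>(r,s).
     if r = s \<and> 1 \<le> r+1 \<and> r+1 \<le> m+1
       then sq (qnum q (int m + 2 - int (r+1)) * qnum q (int m + 1))
            / (qnum q (int m + 2 - int (r+1)) + qnum q (int (r+1) - 1))
     else if m+1 \<le> s \<and> r = s - m \<and> 1 \<le> s - m \<and> s - m \<le> m+1
       then sq (qnum q (int (s - m)) * qnum q (int m + 1))
            / (qnum q (int m + 1 - int (s - m)) + qnum q (int (s - m)))
     else 0)"

definition Rbase :: "'a::field \<Rightarrow> 'a \<Rightarrow> 'a mat" where
  "Rbase q t = mat 4 4 (\<lambda>(r,s).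
     if (r = 0 \<and> s = 0) \<or> (r = 3 \<and> s = 3) then cfun (q*t)
     else if (r = 1 \<and> s = 1) \<or> (r = 2 \<and> s = 2) then cfun t
     else if (r = 1 \<and> s = 2) \<or> (r = 2 \<and> s = 1) then cfun q
     else 0)"

(* Rmat sq qh n1 n2 t = R^{(j1,j2)}(t) with n1 = 2 j1, n2 = 2 j2 (both \<ge> 1);
   qh is the fixed square root q^{1/2}, q = qh^2 *)
fun Rmat :: "('a::field \<Rightarrow> 'a) \<Rightarrow> 'a \<Rightarrow> nat \<Rightarrow> nat \<Rightarrow> 'a \<Rightarrow> 'a mat" where
  "Rmat sq qh (Suc 0) (Suc 0) t = Rbase (qh^2) t"
| "Rmat sq qh (Suc 0) (Suc (Suc m)) t =
     leg23 2 (Fmat sq (qh^2) (Suc m))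
     * leg13 2 2 (m+2) (Rmat sq qh (Suc 0) (Suc m) (t / qh))
     * leg12 (Rbase (qh^2) (qh^(Suc m) * t)) (m+2)
     * leg23 2 (Emat sq (qh^2) (Suc m))"
| "Rmat sq qh (Suc (Suc n)) m t =
     leg12 (Fmat sq (qh^2) (Suc n)) (m+1)
     * leg13 2 (n+2) (m+1) (Rmat sq qh (Suc 0) m (t / qh^(Suc n)))
     * leg23 2 (Rmat sq qh (Suc n) m (qh * t))
     * leg12 (Emat sq (qh^2) (Suc n)) (m+1)"
| "Rmat sq qh 0 m t = 0\<^sub>m 0 0"
| "Rmat sq qh (Suc 0) 0 t = 0\<^sub>m 0 0"

definition blk :: "'a mat \<Rightarrow> nat \<Rightarrow> nat \<Rightarrow> nat \<Rightarrow> 'a mat" where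
  "blk M p a b = mat p p (\<lambda>(i,k). M $$ ((a-1)*p + i, (b-1)*p + k))"

definition c_diagonal :: "int \<Rightarrow> 'a::zero mat \<Rightarrow> bool" where
  "c_diagonal c M = (\<forall>i < dim_row M. \<forall>k < dim_col M. int k - int i \<noteq> c \<longrightarrow> M $$ (i,k) = 0)"

end

theory Submission
  imports Defs
begin

definition wp :: "(nat\<Rightarrow>nat) \<Rightarrow> (nat\<Rightarrow>nat) \<Rightarrow> 'a::zero mat \<Rightarrow> bool" where
  "wp wr wc M = (\<forall>i<dim_row M. \<forall>j<dim_col M. wr i \<noteq> wc j \<longrightarrow> M$$(i,j) = 0)"

definition D :: "nat \<Rightarrow> nat \<Rightarrow> nat" where "D p i = i div p + i mod p"
definition W :: "nat \<Rightarrow> nat \<Rightarrow> nat \<Rightarrow> nat" where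
  "W p q i = i div (p*q) + (i div q) mod p + i mod q"

lemma wp_mult:
  fixes A B :: "'a::semiring_0 mat"
  assumes "wp wr w A" "wp w wc B" "dim_col A = dim_row B"
  shows "wp wr wc (A*B)"
  unfolding wp_def
proof (intro allI impI)
  fix i j assume i: "i < dim_row (A*B)" and j: "j < dim_col (A*B)" and ne: "wr i \<noteq> wc j"
  have "(A*B)$$(i,j) = (\<Sum>k<dim_row B. A$$(i,k) * B$$(k,j))"
    using i j assms(3) by (simp add: scalar_prod_def atLeast0LessThan)
  also have "\<dots> = 0"
  proof (rule sum.neutral, intro ballI)
    fix k assume k: "k \<in> {..<dim_row B}"
    show "A$$(i,k) * B$$(k,j) = 0"
    proof (cases "wr i = w k")
      case True
      then have "w k \<noteq> wc j" using ne by simp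
      then show ?thesis using assms(2) k j unfolding wp_def by auto
    next
      case False
      then show ?thesis using assms(1) assms(3) k i unfolding wp_def by auto
    qed
  qed
  finally show "(A*B)$$(i,j) = 0" .
qed

lemma wp_cong:
  assumes "wp wr wc M" "\<And>i. i<dim_row M \<Longrightarrow> wr i = wr' i" "\<And>j. j<dim_col M \<Longrightarrow> wc j = wc' j"
  shows "wp wr' wc' M"
  using assms unfolding wp_def by metis

lemma dim_kron[simp]: "dim_row (kron A B) = dim_row A * dim_row B" "dim_col (kron A B) = dim_col A * dim_col B"
  unfolding kron_def by auto

lemma wp_kron:
  fixes A B :: "'a::semiring_1 mat"
  assumes "wp ar ac A" "wp br bc B"
  shows "wp (\<lambda>i. ar (i div dim_row B) + br (i mod dim_row B))
            (\<lambda>j. ac (j div dim_col B) + bc (j mod dim_col B)) (kron A B)"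
  unfolding wp_def
proof (intro allI impI)
  fix i j assume i: "i < dim_row (kron A B)" and j: "j < dim_col (kron A B)"
    and ne: "ar (i div dim_row B) + br (i mod dim_row B) \<noteq> ac (j div dim_col B) + bc (j mod dim_col B)"
  have i1: "i div dim_row B < dim_row A" and i2: "i mod dim_row B < dim_row B"
    using i by (auto simp: less_mult_imp_div_less mult.commute) (cases "dim_row B = 0", auto)
  have j1: "j div dim_col B < dim_col A" and j2: "j mod dim_col B < dim_col B"
    using j by (auto simp: less_mult_imp_div_less mult.commute) (cases "dim_col B = 0", auto)
  have e: "kron A B $$ (i,j) = A $$ (i div dim_row B, j div dim_col B) * B $$ (i mod dim_row B, j mod dim_col B)"
    using i j unfolding kron_def by simp
  show "kron A B $$ (i,j) = 0"
  proof (cases "ar (i div dim_row B) = ac (j div dim_col B)")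
    case True
    then have "br (i mod dim_row B) \<noteq> bc (j mod dim_col B)" using ne by simp
    then show ?thesis using assms(2) i2 j2 e unfolding wp_def by auto
  next
    case False
    then show ?thesis using assms(1) i1 j1 e unfolding wp_def by auto
  qed
qed

lemma wp_one: "wp (\<lambda>i. i) (\<lambda>i. i) (1\<^sub>m n :: 'a::semiring_1 mat)"
  unfolding wp_def by auto

lemma L1: "x div (p*q) + ((x mod (p*q)) div q + (x mod (p*q)) mod q) = W p q x"
proof (cases "q = 0")
  case True
  then show ?thesis unfolding W_def by simp
next
  case False
  have e: "x mod (p*q) = q * (x div q mod p) + x mod q"
    by (metis mod_mult2_eq mult.commute)
  have d1: "(q * (x div q mod p) + x mod q) div q = x div q mod p" using False by simp
  have d2: "(q * (x div q mod p) + x mod q) mod q = x mod q" by simp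
  have d3: "x div (p*q) = x div q div p" by (metis div_mult2_eq mult.commute)
  show ?thesis unfolding W_def e d1 d2 d3 by simp
qed

lemma L2: "D q (x div n) + x mod n = W q n x"
  unfolding W_def D_def by (simp add: div_mult2_eq mult.commute)

lemma dims[simp]:
  "dim_row (Emat sq q m) = 2*m+2" "dim_col (Emat sq q m) = m+2"
  "dim_row (Fmat sq q m) = m+2" "dim_col (Fmat sq q m) = 2*m+2"
  "dim_row (Rbase q t) = 4" "dim_col (Rbase q t) = 4"
  "dim_row (flip23 n1 n2 n3 :: 'b::semiring_1 mat) = n1*n2*n3"
  "dim_col (flip23 n1 n2 n3 :: 'b::semiring_1 mat) = n1*n2*n3"
  "dim_row (leg12 X n) = dim_row X * n" "dim_col (leg12 X n) = dim_col X * n"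
  "dim_row (leg23 n X) = n * dim_row X" "dim_col (leg23 n X) = n * dim_col X"
  by (auto simp: Emat_def Fmat_def Rbase_def flip23_def leg12_def leg23_def)

lemma wp_E: "wp (D (m+1)) (\<lambda>i. i) (Emat sq q m)"
  unfolding wp_def D_def
proof (intro allI impI)
  fix r s assume r: "r < dim_row (Emat sq q m)" and s: "s < dim_col (Emat sq q m)"
    and ne: "r div (m+1) + r mod (m+1) \<noteq> s"
  show "Emat sq q m $$ (r,s) = 0"
  proof (cases "r \<le> m")
    case True
    then show ?thesis using r s ne by (auto simp: Emat_def)
  next
    case False
    then have "r div (m+1) = 1" "r mod (m+1) = r - m - 1" using r
      by (auto simp: div_if mod_if)
    then show ?thesis using r s ne False by (auto simp: Emat_def)
  qed
qed

lemma wp_F: "wp (\<lambda>i. i) (D (m+1)) (Fmat sq q m)"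
  unfolding wp_def D_def
proof (intro allI impI)
  fix r s assume r: "r < dim_row (Fmat sq q m)" and s: "s < dim_col (Fmat sq q m)"
    and ne: "r \<noteq> s div (m+1) + s mod (m+1)"
  show "Fmat sq q m $$ (r,s) = 0"
  proof (cases "s \<le> m")
    case True
    then show ?thesis using r s ne by (auto simp: Fmat_def)
  next
    case False
    then have "s div (m+1) = 1" "s mod (m+1) = s - m - 1" using s
      by (auto simp: div_if mod_if)
    then show ?thesis using r s ne False by (auto simp: Fmat_def)
  qed
qed

lemma wp_Rbase: "wp (D 2) (D 2) (Rbase q t)"
  unfolding wp_def D_def
proof (intro allI impI)
  fix r s assume r: "r < dim_row (Rbase q t)" and s: "s < dim_col (Rbase q t)"
    and ne: "r div 2 + r mod 2 \<noteq> s div 2 + s mod 2"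
  have r4: "r < 4" and s4: "s < 4" using r s by auto
  have "r = 0 \<or> r = 1 \<or> r = 2 \<or> r = 3" using r4 by presburger
  moreover have "s = 0 \<or> s = 1 \<or> s = 2 \<or> s = 3" using s4 by presburger
  ultimately show "Rbase q t $$ (r,s) = 0" using ne r4 s4
    by (elim disjE) (simp_all add: Rbase_def)
qed

lemma W3: "b < n2 \<Longrightarrow> c < n3 \<Longrightarrow> W n3 n2 (a*(n3*n2) + c*n2 + b) = a + c + b"
proof -
  assume b: "b < n2" and c: "c < n3"
  have lt: "c*n2 + b < n3*n2"
  proof -
    have "c*n2 + b < c*n2 + n2" using b by simp
    also have "\<dots> = (c+1)*n2" by simp
    also have "\<dots> \<le> n3*n2" using c by (intro mult_right_mono) auto
    finally show ?thesis .
  qed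
  have "(a*(n3*n2) + c*n2 + b) div (n3*n2) = a" using lt
    by (metis add.assoc add.commute div_less div_mult_self1 lt add_0 less_nat_zero_code mult_0 neq0_conv)
  moreover have "(a*(n3*n2) + c*n2 + b) div n2 = a*n3 + c" using b
    by (simp add: mult.assoc[symmetric] add.assoc)
  moreover have "(a*(n3*n2) + c*n2 + b) mod n2 = b" using b
    by (simp add: mult.assoc[symmetric] add.assoc)
  ultimately show ?thesis using c unfolding W_def by simp
qed

lemma wp_flip: "wp (W n3 n2) (W n2 n3) (flip23 n1 n2 n3 :: 'a::semiring_1 mat)"
  unfolding wp_def
proof (intro allI impI)
  fix r s assume r: "r < dim_row (flip23 n1 n2 n3 :: 'a mat)" and s: "s < dim_col (flip23 n1 n2 n3 :: 'a mat)"
    and ne: "W n3 n2 r \<noteq> W n2 n3 s"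
  show "(flip23 n1 n2 n3 :: 'a mat) $$ (r,s) = 0"
  proof (rule ccontr)
    assume "(flip23 n1 n2 n3 :: 'a mat) $$ (r,s) \<noteq> 0"
    then have req: "r = (s div (n2*n3)) * (n3*n2) + (s mod n3) * n2 + (s div n3) mod n2"
      using r s by (auto simp: flip23_def split: if_splits)
    have n2: "n2 > 0" using s by (cases "n2 = 0") auto
    have n3: "n3 > 0" using s by (cases "n3 = 0") auto
    have "W n3 n2 r = s div (n2*n3) + s mod n3 + (s div n3) mod n2"
      unfolding req using n2 n3 by (intro W3) auto
    also have "\<dots> = W n2 n3 s" unfolding W_def by simp
    finally show False using ne by simp
  qed
qed

lemma wp_leg12_D:
  fixes X :: "'a::semiring_1 mat"
  assumes "wp (D q) (D q) X"
  shows "wp (W q n) (W q n) (leg12 X n)"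
  using wp_kron[OF assms wp_one[where n=n]] unfolding leg12_def
  by (rule wp_cong) (auto simp: L2)

lemma wp_leg13:
  fixes X :: "'a::semiring_1 mat"
  assumes "wp (D n3) (D n3) X" "dim_row X = n1*n3" "dim_col X = n1*n3"
  shows "wp (W n2 n3) (W n2 n3) (leg13 n1 n2 n3 X)"
    "dim_row (leg13 n1 n2 n3 X) = n1*n2*n3" "dim_col (leg13 n1 n2 n3 X) = n1*n2*n3"
proof -
  have k: "wp (W n3 n2) (W n3 n2) (kron X (1\<^sub>m n2))"
    using wp_leg12_D[OF assms(1), of n2] unfolding leg12_def .
  show "wp (W n2 n3) (W n2 n3) (leg13 n1 n2 n3 X)"
    unfolding leg13_def
    by (rule wp_mult[OF wp_mult[OF wp_flip k] wp_flip]) (auto simp: assms ac_simps)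
  show "dim_row (leg13 n1 n2 n3 X) = n1*n2*n3" "dim_col (leg13 n1 n2 n3 X) = n1*n2*n3"
    unfolding leg13_def by (auto simp: ac_simps)
qed

lemma wp_leg12_F:
  "wp (D (n+1)) (W (m+1) (n+1)) (leg12 (Fmat sq q m) (n+1))"
  using wp_kron[OF wp_F wp_one[where n="n+1"]] unfolding leg12_def
  by (rule wp_cong) (auto simp: L2[unfolded D_def] D_def)

lemma wp_leg12_E:
  "wp (W (m+1) (n+1)) (D (n+1)) (leg12 (Emat sq q m) (n+1))"
  using wp_kron[OF wp_E wp_one[where n="n+1"]] unfolding leg12_def
  by (rule wp_cong) (auto simp: L2[unfolded D_def] D_def)

lemma wp_leg23_D:
  fixes X :: "'a::semiring_1 mat"
  assumes "wp (D q) (D q) X" "dim_row X = p*q" "dim_col X = p*q"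
  shows "wp (W p q) (W p q) (leg23 n X)"
  using wp_kron[OF wp_one[where n=n] assms(1)] unfolding leg23_def
  by (rule wp_cong) (auto simp: L1[symmetric] assms D_def)

lemma wp_leg23_F:
  "wp (D (m+2)) (W 2 (m+1)) (leg23 n (Fmat sq q m))"
  using wp_kron[OF wp_one[where n=n] wp_F] unfolding leg23_def
  by (rule wp_cong) (auto simp: L1[symmetric] D_def mult_2 add.commute)

lemma wp_leg23_E:
  "wp (W 2 (m+1)) (D (m+2)) (leg23 n (Emat sq q m))"
  using wp_kron[OF wp_one[where n=n] wp_E] unfolding leg23_def
  by (rule wp_cong) (auto simp: L1[symmetric] D_def mult_2 add.commute)

lemma Rmat_wp:
  "n1 \<ge> 1 \<Longrightarrow> n2 \<ge> 1 \<Longrightarrow>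
    dim_row (Rmat sq qh n1 n2 t) = (n1+1)*(n2+1) \<and> dim_col (Rmat sq qh n1 n2 t) = (n1+1)*(n2+1)
    \<and> wp (D (n2+1)) (D (n2+1)) (Rmat sq qh n1 n2 t)"
proof (induction sq qh n1 n2 t rule: Rmat.induct)
  case (1 sq qh t)
  then show ?case using wp_Rbase[of "qh^2" t] by (simp add: numeral_2_eq_2)
next
  case (2 sq qh m t)
  define X where "X = Rmat sq qh (Suc 0) (Suc m) (t / qh)"
  have X: "dim_row X = 2*(m+2)" "dim_col X = 2*(m+2)" "wp (D (m+2)) (D (m+2)) X"
    using 2 unfolding X_def by auto
  have A: "wp (D (m+3)) (W 2 (m+2)) (leg23 2 (Fmat sq (qh^2) (Suc m)))"
    using wp_leg23_F[of "Suc m" 2 sq "qh^2"] by (simp add: numeral_eq_Suc)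
  have B: "wp (W 2 (m+2)) (W 2 (m+2)) (leg13 2 2 (m+2) X)"
    "dim_row (leg13 2 2 (m+2) X) = 2*2*(m+2)" "dim_col (leg13 2 2 (m+2) X) = 2*2*(m+2)"
    using wp_leg13[OF X(3), of 2 2] X by auto
  have C: "wp (W 2 (m+2)) (W 2 (m+2)) (leg12 (Rbase (qh^2) (qh^(Suc m) * t)) (m+2))"
    by (rule wp_leg12_D[OF wp_Rbase])
  have E: "wp (W 2 (m+2)) (D (m+3)) (leg23 2 (Emat sq (qh^2) (Suc m)))"
    using wp_leg23_E[of "Suc m" 2 sq "qh^2"] by (simp add: numeral_eq_Suc)
  have eq: "Rmat sq qh (Suc 0) (Suc (Suc m)) t = leg23 2 (Fmat sq (qh^2) (Suc m))
     * leg13 2 2 (m+2) X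
     * leg12 (Rbase (qh^2) (qh^(Suc m) * t)) (m+2)
     * leg23 2 (Emat sq (qh^2) (Suc m))" unfolding X_def by simp
  have "wp (D (m+3)) (D (m+3)) (leg23 2 (Fmat sq (qh^2) (Suc m))
     * leg13 2 2 (m+2) X
     * leg12 (Rbase (qh^2) (qh^(Suc m) * t)) (m+2)
     * leg23 2 (Emat sq (qh^2) (Suc m)))"
    by (rule wp_mult[OF wp_mult[OF wp_mult[OF A B(1)] C] E]) (use B in auto)
  then show ?case using B unfolding eq by (simp add: numeral_eq_Suc)
next
  case (3 sq qh n m t)
  define X1 where "X1 = Rmat sq qh (Suc 0) m (t / qh^(Suc n))"
  define X2 where "X2 = Rmat sq qh (Suc n) m (qh * t)"
  have X1: "dim_row X1 = 2*(m+1)" "dim_col X1 = 2*(m+1)" "wp (D (m+1)) (D (m+1)) X1"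
    using 3 unfolding X1_def by auto
  have X2: "dim_row X2 = (n+2)*(m+1)" "dim_col X2 = (n+2)*(m+1)" "wp (D (m+1)) (D (m+1)) X2"
    using 3 unfolding X2_def by auto
  have A: "wp (D (m+1)) (W (n+2) (m+1)) (leg12 (Fmat sq (qh^2) (Suc n)) (m+1))"
    using wp_leg12_F[of m "Suc n" sq "qh^2"] by simp
  have B: "wp (W (n+2) (m+1)) (W (n+2) (m+1)) (leg13 2 (n+2) (m+1) X1)"
    "dim_row (leg13 2 (n+2) (m+1) X1) = 2*(n+2)*(m+1)" "dim_col (leg13 2 (n+2) (m+1) X1) = 2*(n+2)*(m+1)"
    using wp_leg13[OF X1(3), of 2 "n+2"] X1 by auto
  have C: "wp (W (n+2) (m+1)) (W (n+2) (m+1)) (leg23 2 X2)"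
    by (rule wp_leg23_D[OF X2(3) X2(1) X2(2)])
  have E: "wp (W (n+2) (m+1)) (D (m+1)) (leg12 (Emat sq (qh^2) (Suc n)) (m+1))"
    using wp_leg12_E[of "Suc n" m sq "qh^2"] by simp
  have "wp (D (m+1)) (D (m+1)) (leg12 (Fmat sq (qh^2) (Suc n)) (m+1)
     * leg13 2 (n+2) (m+1) X1
     * leg23 2 X2
     * leg12 (Emat sq (qh^2) (Suc n)) (m+1))"
    by (rule wp_mult[OF wp_mult[OF wp_mult[OF A B(1)] C] E]) (use B X2 in auto)
  moreover have eq: "Rmat sq qh (Suc (Suc n)) m t = leg12 (Fmat sq (qh^2) (Suc n)) (m+1)
     * leg13 2 (n+2) (m+1) X1
     * leg23 2 X2
     * leg12 (Emat sq (qh^2) (Suc n)) (m+1)" unfolding X1_def X2_def by simp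
  ultimately show ?case using B X2 by simp
next
  case (4 sq qh m t)
  then show ?case by simp
next
  case (5 sq qh t)
  then show ?case by simp
qed

lemma idx_bound: "1 \<le> (a::nat) \<Longrightarrow> a \<le> n1 + 1 \<Longrightarrow> (i::nat) < p \<Longrightarrow> (a-1)*p + i < (n1+1)*p"
proof -
  assume a: "1 \<le> a" "a \<le> n1 + 1" and i: "i < p"
  have "(a-1)*p + i < (a-1)*p + p" using i by (rule add_strict_left_mono)
  also have "\<dots> = a*p" using a by (cases a) auto
  also have "\<dots> \<le> (n1+1)*p" using a by (intro mult_right_mono) auto
  finally show ?thesis .
qed

lemma D_idx: "(i::nat) < p \<Longrightarrow> D p ((a-1)*p + i) = (a-1) + i"
  unfolding D_def by simp

theorem propositionA2:
  fixes sq :: "'a::field_char_0 \<Rightarrow> 'a" and qh t :: 'a and n1 n2 a b :: nat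
  assumes sq: "\<forall>x. sq x * sq x = x"
    and q_nz: "qh^2 \<noteq> 0"
    and q_not_root: "\<forall>k::nat. k > 0 \<longrightarrow> (qh^2)^k \<noteq> 1"
    and t_nz: "t \<noteq> 0"
    and n1: "n1 \<ge> 1" and n2: "n2 \<ge> 1"
    and ab: "1 \<le> a" "a \<le> n1 + 1" "1 \<le> b" "b \<le> n1 + 1"
  shows "(\<bar>int a - int b\<bar> \<le> int n2 \<longrightarrow>
            c_diagonal (int a - int b) (blk (Rmat sq qh n1 n2 t) (n2+1) a b))
       \<and> (\<bar>int a - int b\<bar> \<ge> int n2 + 1 \<longrightarrow>
            blk (Rmat sq qh n1 n2 t) (n2+1) a b = 0\<^sub>m (n2+1) (n2+1))"
proof -
  define M where "M = Rmat sq qh n1 n2 t"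
  define p where "p = n2 + 1"
  have R: "dim_row M = (n1+1)*p" "dim_col M = (n1+1)*p" "wp (D p) (D p) M"
    using Rmat_wp[OF n1 n2, of sq qh t] unfolding M_def p_def by auto
  have key: "blk M p a b $$ (i,k) = 0"
    if i: "i < p" and k: "k < p" and ne: "int k - int i \<noteq> int a - int b" for i k
  proof -
    have bi: "(a-1)*p + i < dim_row M" using idx_bound[OF ab(1,2) i] R by simp
    have bk: "(b-1)*p + k < dim_col M" using idx_bound[OF ab(3,4) k] R by simp
    have "D p ((a-1)*p + i) \<noteq> D p ((b-1)*p + k)"
      unfolding D_idx[OF i] D_idx[OF k] using ne ab by linarith
    then have "M $$ ((a-1)*p + i, (b-1)*p + k) = 0"
      using R(3) bi bk unfolding wp_def by blast
    then show ?thesis using i k unfolding blk_def by simp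
  qed
  have dblk: "dim_row (blk M p a b) = p" "dim_col (blk M p a b) = p"
    unfolding blk_def by auto
  have c1: "c_diagonal (int a - int b) (blk M p a b)"
    unfolding c_diagonal_def dblk using key by blast
  have c2: "blk M p a b = 0\<^sub>m p p" if "\<bar>int a - int b\<bar> \<ge> int n2 + 1"
  proof (rule eq_matI)
    fix i k assume i: "i < dim_row (0\<^sub>m p p :: 'a mat)" and k: "k < dim_col (0\<^sub>m p p :: 'a mat)"
    then have "int k - int i \<noteq> int a - int b" using that unfolding p_def by auto
    then show "blk M p a b $$ (i,k) = 0\<^sub>m p p $$ (i,k)" using key i k by simp
  qed (auto simp: dblk)
  show ?thesis using c1 c2 unfolding M_def p_def by blast
qed

end
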